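(* Let $(Q,P)$ be a weakly quasi-lattice ordered group and let $\Lambda$ be a $P$-graph with $\mathrm{FA}(\Lambda)\neq\emptyset$. For any $\lambda\in\Lambda$, the following are equivalent: (1) $\lambda\in\mathrm{FA}(\Lambda)$; (2) the set $Z(\lambda)=\{x\in\mathcal{F}(\Lambda):\lambda\in x\}$ is compact.
   Context: $(Q,P)$ weakly quasi-lattice ordered: $Q$ a discrete group, $P\subseteq Q$ a subsemigroup containing the identity $e$ with $P\cap P^{-1}=\{e\}$, and, with $p\le r$ meaning $pq=r$ for some $q\in P$, any two elements of $P$ with a common upper bound have a least common upper bound. A $P$-graph is a countable small category $\Lambda$ (range/source $r,s$) with a functor $d:\Lambda\to P$ with unique factorisation (if $d(\lambda)=pq$ there are unique $\mu,\nu$ with $\lambda=\mu\nu$, $d(\mu)=p$, $d(\nu)=q$). Write $\lambda\Lambda=\{\lambda\mu: s(\lambda)=r(\mu)\}$, $\mu\preceq\lambda$ iff $\lambda\in\mu\Lambda$. $\mathrm{FA}(\Lambda)$ is the set of $\lambda$ such that for all $\mu\in\lambda\Lambda,\nu\in\Lambda$ there is a finite $J\subseteq\Lambda$ with $\mu\Lambda\cap\nu\Lambda=\bigcup_{\kappa\in J}\kappa\Lambda$. A filter is a nonempty subset $x\subseteq\Lambda$ that is hereditary ($\lambda\preceq\mu\in x\Rightarrow\lambda\in x$) and directed ($\mu,\nu\in x$ implies some $\lambda\in x$ with $\mu,\nu\preceq\lambda$); $\mathcal{F}(\Lambda)$ is the set of filters, with the subspace topology from $\mathcal{P}(\Lambda)$,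 which carries the product topology from $\{0,1\}^\Lambda$ (basis: $\{x: K_1\subseteq x\subseteq\Lambda\setminus K_2\}$ for finite $K_1,K_2$). *)

theory Defs
  imports "HOL-Analysis.Analysis" "HOL-Algebra.Group"
begin

definition wqlo_le :: "('q, 'm) monoid_scheme \<Rightarrow> 'q set \<Rightarrow> 'q \<Rightarrow> 'q \<Rightarrow> bool" where
  "wqlo_le G P p r \<longleftrightarrow> (\<exists>q\<in>P. p \<otimes>\<^bsub>G\<^esub> q = r)"

definition wqlo :: "('q, 'm) monoid_scheme \<Rightarrow> 'q set \<Rightarrow> bool" where
  "wqlo G P \<longleftrightarrow> group G \<and> P \<subseteq> carrier G \<and> \<one>\<^bsub>G\<^esub> \<in> P
     \<and> (\<forall>p\<in>P. \<forall>q\<in>P. p \<otimes>\<^bsub>G\<^esub> q \<in> P)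
     \<and> {p \<in> P. inv\<^bsub>G\<^esub> p \<in> P} = {\<one>\<^bsub>G\<^esub>}
     \<and> (\<forall>p\<in>P. \<forall>q\<in>P. (\<exists>r\<in>P. wqlo_le G P p r \<and> wqlo_le G P q r) \<longrightarrow>
          (\<exists>l\<in>P. wqlo_le G P p l \<and> wqlo_le G P q l \<and>
             (\<forall>r\<in>P. wqlo_le G P p r \<and> wqlo_le G P q r \<longrightarrow> wqlo_le G P l r)))"

text \<open>L is the set of morphisms, r / s give the range / source (an identity
  morphism), c is composition: c la \<mu> is la\<mu> (defined when s la = r \<mu>).\<close>
definition small_category ::
  "'a set \<Rightarrow> ('a \<Rightarrow> 'a) \<Rightarrow> ('a \<Rightarrow> 'a) \<Rightarrow> ('a \<Rightarrow> 'a \<Rightarrow> 'a) \<Rightarrow> bool" where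
  "small_category L r s c \<longleftrightarrow>
     (\<forall>la\<in>L. r la \<in> L \<and> s la \<in> L
        \<and> r (r la) = r la \<and> s (r la) = r la \<and> r (s la) = s la \<and> s (s la) = s la
        \<and> c (r la) la = la \<and> c la (s la) = la)
   \<and> (\<forall>la\<in>L. \<forall>\<mu>\<in>L. s la = r \<mu> \<longrightarrow>
        c la \<mu> \<in> L \<and> r (c la \<mu>) = r la \<and> s (c la \<mu>) = s \<mu>)
   \<and> (\<forall>la\<in>L. \<forall>\<mu>\<in>L. \<forall>\<nu>\<in>L. s la = r \<mu> \<longrightarrow> s \<mu> = r \<nu> \<longrightarrow>
        c (c la \<mu>) \<nu> = c la (c \<mu> \<nu>))"

definition P_graph ::
  "('q, 'm) monoid_scheme \<Rightarrow> 'q set \<Rightarrow> 'a set \<Rightarrow> ('a \<Rightarrow> 'a) \<Rightarrow> ('a \<Rightarrow> 'a)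
     \<Rightarrow> ('a \<Rightarrow> 'a \<Rightarrow> 'a) \<Rightarrow> ('a \<Rightarrow> 'q) \<Rightarrow> bool" where
  "P_graph G P L r s c d \<longleftrightarrow>
     countable L \<and> small_category L r s c
   \<and> (\<forall>la\<in>L. d la \<in> P)
   \<and> (\<forall>la\<in>L. d (s la) = \<one>\<^bsub>G\<^esub>)
   \<and> (\<forall>la\<in>L. \<forall>\<mu>\<in>L. s la = r \<mu> \<longrightarrow> d (c la \<mu>) = d la \<otimes>\<^bsub>G\<^esub> d \<mu>)
   \<and> (\<forall>la\<in>L. \<forall>p\<in>P. \<forall>q\<in>P. d la = p \<otimes>\<^bsub>G\<^esub> q \<longrightarrow>
        (\<exists>!(\<mu>, \<nu>). \<mu> \<in> L \<and> \<nu> \<in> L \<and> s \<mu> = r \<nu> \<and> la = c \<mu> \<nu> \<and> d \<mu> = p \<and> d \<nu> = q))"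

definition ext_set :: "'a set \<Rightarrow> ('a \<Rightarrow> 'a) \<Rightarrow> ('a \<Rightarrow> 'a) \<Rightarrow> ('a \<Rightarrow> 'a \<Rightarrow> 'a) \<Rightarrow> 'a \<Rightarrow> 'a set" where
  "ext_set L r s c la = {c la \<mu> | \<mu>. \<mu> \<in> L \<and> s la = r \<mu>}"

definition prec :: "'a set \<Rightarrow> ('a \<Rightarrow> 'a) \<Rightarrow> ('a \<Rightarrow> 'a) \<Rightarrow> ('a \<Rightarrow> 'a \<Rightarrow> 'a) \<Rightarrow> 'a \<Rightarrow> 'a \<Rightarrow> bool" where
  "prec L r s c \<mu> la \<longleftrightarrow> la \<in> ext_set L r s c \<mu>"

definition FA :: "'a set \<Rightarrow> ('a \<Rightarrow> 'a) \<Rightarrow> ('a \<Rightarrow> 'a) \<Rightarrow> ('a \<Rightarrow> 'a \<Rightarrow> 'a) \<Rightarrow> 'a set" where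
  "FA L r s c = {la \<in> L. \<forall>\<mu> \<in> ext_set L r s c la. \<forall>\<nu> \<in> L.
      \<exists>J. finite J \<and> J \<subseteq> L \<and>
        ext_set L r s c \<mu> \<inter> ext_set L r s c \<nu> = (\<Union>\<kappa>\<in>J. ext_set L r s c \<kappa>)}"

definition filters :: "'a set \<Rightarrow> ('a \<Rightarrow> 'a) \<Rightarrow> ('a \<Rightarrow> 'a) \<Rightarrow> ('a \<Rightarrow> 'a \<Rightarrow> 'a) \<Rightarrow> 'a set set" where
  "filters L r s c = {x. x \<subseteq> L \<and> x \<noteq> {}
      \<and> (\<forall>la\<in>L. \<forall>\<mu>\<in>x. prec L r s c la \<mu> \<longrightarrow> la \<in> x)
      \<and> (\<forall>\<mu>\<in>x. \<forall>\<nu>\<in>x. \<exists>la\<in>x. prec L r s c \<mu> la \<and> prec L r s c \<nu> la)}"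

text \<open>Product topology on the power set of L (identified with {0,1}^L),
  given by its standard basis {x : K1 \<subseteq> x \<subseteq> L - K2}, K1, K2 finite.\<close>
definition powerset_top :: "'a set \<Rightarrow> 'a set topology" where
  "powerset_top L = topology_generated_by
     {{x. K1 \<subseteq> x \<and> x \<subseteq> L - K2} | K1 K2. finite K1 \<and> finite K2 \<and> K1 \<subseteq> L \<and> K2 \<subseteq> L}"

definition filter_top :: "'a set \<Rightarrow> ('a \<Rightarrow> 'a) \<Rightarrow> ('a \<Rightarrow> 'a) \<Rightarrow> ('a \<Rightarrow> 'a \<Rightarrow> 'a) \<Rightarrow> 'a set topology" where
  "filter_top L r s c = subtopology (powerset_top L) (filters L r s c)"

definition cylZ :: "'a set \<Rightarrow> ('a \<Rightarrow> 'a) \<Rightarrow> ('a \<Rightarrow> 'a) \<Rightarrow> ('a \<Rightarrow> 'a \<Rightarrow> 'a) \<Rightarrow> 'a \<Rightarrow> 'a set set" where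
  "cylZ L r s c la = {x \<in> filters L r s c. la \<in> x}"

end

theory Submission
  imports Defs
begin

lemma ext_self:
  assumes "small_category L r s c" "a \<in> L"
  shows "a \<in> ext_set L r s c a"
proof -
  have "s a \<in> L" "r (s a) = s a" "c a (s a) = a" using assms unfolding small_category_def by auto
  then show ?thesis unfolding ext_set_def by (metis (mono_tags, lifting) mem_Collect_eq)
qed

lemma ext_sub:
  assumes "small_category L r s c" "a \<in> L"
  shows "ext_set L r s c a \<subseteq> L"
  using assms unfolding small_category_def ext_set_def by auto

lemma ext_trans:
  assumes sc: "small_category L r s c" and a: "a \<in> L" and b: "b \<in> ext_set L r s c a"
  shows "ext_set L r s c b \<subseteq> ext_set L r s c a"
proof
  fix x assume x: "x \<in> ext_set L r s c b"
  obtain \<mu> where mu: "\<mu> \<in> L" "s a = r \<mu>" "b = c a \<mu>" using b unfolding ext_set_def by auto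
  obtain \<nu> where nu: "\<nu> \<in> L" "s b = r \<nu>" "x = c b \<nu>" using x unfolding ext_set_def by auto
  have sb: "s b = s \<mu>" using sc a mu unfolding small_category_def by auto
  have x2: "x = c a (c \<mu> \<nu>)" using sc a mu nu sb unfolding small_category_def by auto
  have "c \<mu> \<nu> \<in> L" "r (c \<mu> \<nu>) = r \<mu>" using sc mu nu sb unfolding small_category_def by auto
  then show "x \<in> ext_set L r s c a" unfolding ext_set_def using x2 mu by auto
qed

lemma grp_lcancel:
  assumes "group G" "a \<in> carrier G" "b \<in> carrier G" "x \<in> carrier G"
    "a \<otimes>\<^bsub>G\<^esub> b = a \<otimes>\<^bsub>G\<^esub> x"
  shows "b = x"
  using assms by (metis group.Units_eq group.is_monoid monoid.Units_l_cancel)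

lemma ex1_pair_uniq:
  assumes "\<exists>!(x, y). Q x y" "Q a b" "Q a' b'"
  shows "a = a' \<and> b = b'"
  using assms by (metis (mono_tags, lifting) case_prod_conv prod.inject)

lemma ex1_pair_ex:
  assumes "\<exists>!(x, y). Q x y" shows "\<exists>x y. Q x y"
proof -
  from assms obtain z where "case z of (x, y) \<Rightarrow> Q x y" by blast
  then show ?thesis by (cases z) auto
qed

lemma deg_eq_ext:
  assumes w: "wqlo G P" and pg: "P_graph G P L r s c d"
    and k: "k \<in> L" and k': "k' \<in> ext_set L r s c k" and dd: "d k' = d k"
  shows "k' = k"
proof -
  have grp: "group G" and PC: "P \<subseteq> carrier G" and one: "\<one>\<^bsub>G\<^esub> \<in> P" using w unfolding wqlo_def by auto
  have sc: "small_category L r s c" using pg unfolding P_graph_def by auto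
  obtain t where t: "t \<in> L" "s k = r t" "k' = c k t" using k' unfolding ext_set_def by auto
  have "d k' = d k \<otimes>\<^bsub>G\<^esub> d t" using pg k t unfolding P_graph_def by auto
  moreover have "d k \<in> carrier G" "d t \<in> carrier G" using pg k t PC unfolding P_graph_def by auto
  ultimately have dt: "d t = \<one>\<^bsub>G\<^esub>" using dd grp
    by (metis grp_lcancel group.is_monoid monoid.r_one monoid.one_closed)
  have dt2: "d t = \<one>\<^bsub>G\<^esub> \<otimes>\<^bsub>G\<^esub> \<one>\<^bsub>G\<^esub>" using dt grp by (simp add: group.is_monoid monoid.l_one monoid.one_closed)
  have U: "\<exists>!(\<mu>, \<nu>). \<mu> \<in> L \<and> \<nu> \<in> L \<and> s \<mu> = r \<nu> \<and> t = c \<mu> \<nu> \<and> d \<mu> = \<one>\<^bsub>G\<^esub> \<and> d \<nu> = \<one>\<^bsub>G\<^esub>"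
    using pg t one dt2 unfolding P_graph_def by blast
  have rt: "r t \<in> L" "s (r t) = r t" "c (r t) t = t" "s t \<in> L" "r (s t) = s t" "c t (s t) = t"
    using sc t unfolding small_category_def by auto
  have drt: "d (r t) = \<one>\<^bsub>G\<^esub>" using pg rt(1,2) unfolding P_graph_def by metis
  have dst: "d (s t) = \<one>\<^bsub>G\<^esub>" using pg t unfolding P_graph_def by auto
  have "r t = t" using ex1_pair_uniq[OF U, of "r t" t t "s t"] rt drt dst dt t by auto
  then have "k' = c k (s k)" using t by simp
  then show ?thesis using sc k unfolding small_category_def by auto
qed

lemma pg_sc: "P_graph G P L r s c d \<Longrightarrow> small_category L r s c"
  unfolding P_graph_def by blast
lemma pg_dP: "P_graph G P L r s c d \<Longrightarrow> x \<in> L \<Longrightarrow> d x \<in> P"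
  unfolding P_graph_def by blast
lemma pg_ds: "P_graph G P L r s c d \<Longrightarrow> x \<in> L \<Longrightarrow> d (s x) = \<one>\<^bsub>G\<^esub>"
  unfolding P_graph_def by blast
lemma pg_dc: "P_graph G P L r s c d \<Longrightarrow> x \<in> L \<Longrightarrow> y \<in> L \<Longrightarrow> s x = r y \<Longrightarrow>
    d (c x y) = d x \<otimes>\<^bsub>G\<^esub> d y"
  unfolding P_graph_def by blast
lemma pg_uf: "P_graph G P L r s c d \<Longrightarrow> x \<in> L \<Longrightarrow> p \<in> P \<Longrightarrow> q \<in> P \<Longrightarrow> d x = p \<otimes>\<^bsub>G\<^esub> q \<Longrightarrow>
    (\<exists>!(\<mu>, \<nu>). \<mu> \<in> L \<and> \<nu> \<in> L \<and> s \<mu> = r \<nu> \<and> x = c \<mu> \<nu> \<and> d \<mu> = p \<and> d \<nu> = q)"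
  unfolding P_graph_def by blast
lemma sc_obj: "small_category L r s c \<Longrightarrow> x \<in> L \<Longrightarrow> r x \<in> L \<and> s x \<in> L
        \<and> r (r x) = r x \<and> s (r x) = r x \<and> r (s x) = s x \<and> s (s x) = s x
        \<and> c (r x) x = x \<and> c x (s x) = x"
  unfolding small_category_def by blast
lemma sc_comp: "small_category L r s c \<Longrightarrow> x \<in> L \<Longrightarrow> y \<in> L \<Longrightarrow> s x = r y \<Longrightarrow>
        c x y \<in> L \<and> r (c x y) = r x \<and> s (c x y) = s y"
  unfolding small_category_def by blast
lemma sc_assoc: "small_category L r s c \<Longrightarrow> x \<in> L \<Longrightarrow> y \<in> L \<Longrightarrow> z \<in> L \<Longrightarrow> s x = r y \<Longrightarrow> s y = r z \<Longrightarrow>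
        c (c x y) z = c x (c y z)"
  unfolding small_category_def by blast

lemma one_side:
  assumes w: "wqlo G P" and pg: "P_graph G P L r s c d"
    and mu: "\<mu> \<in> L" and eta: "\<eta> \<in> ext_set L r s c \<mu>"
    and p: "p \<in> P" and q: "q \<in> P" and l1: "d \<mu> \<otimes>\<^bsub>G\<^esub> p = l" and l2: "l \<otimes>\<^bsub>G\<^esub> q = d \<eta>"
  shows "\<exists>k a2. k \<in> L \<and> k \<in> ext_set L r s c \<mu> \<and> d k = l \<and> a2 \<in> L \<and> s k = r a2 \<and> \<eta> = c k a2 \<and> d a2 = q"
proof -
  have grp: "group G" and PC: "P \<subseteq> carrier G" using w unfolding wqlo_def by auto
  have sc: "small_category L r s c" using pg by (rule pg_sc)
  obtain a where a: "a \<in> L" "s \<mu> = r a" "\<eta> = c \<mu> a" using eta unfolding ext_set_def by auto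
  have de: "d \<eta> = d \<mu> \<otimes>\<^bsub>G\<^esub> d a" using pg_dc[OF pg mu a(1,2)] a(3) by simp
  have cr: "d \<mu> \<in> carrier G" "d a \<in> carrier G" "p \<in> carrier G" "q \<in> carrier G"
    using pg_dP[OF pg mu] pg_dP[OF pg a(1)] PC p q by auto
  have mon: "monoid G" using grp by (rule group.is_monoid)
  have "d \<mu> \<otimes>\<^bsub>G\<^esub> (p \<otimes>\<^bsub>G\<^esub> q) = (d \<mu> \<otimes>\<^bsub>G\<^esub> p) \<otimes>\<^bsub>G\<^esub> q"
    using monoid.m_assoc[OF mon cr(1) cr(3) cr(4)] by simp
  also have "\<dots> = d \<mu> \<otimes>\<^bsub>G\<^esub> d a" using l1 l2 de by simp
  finally have "d \<mu> \<otimes>\<^bsub>G\<^esub> d a = d \<mu> \<otimes>\<^bsub>G\<^esub> (p \<otimes>\<^bsub>G\<^esub> q)" by simp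
  then have da: "d a = p \<otimes>\<^bsub>G\<^esub> q"
    using grp_lcancel[OF grp cr(1) cr(2) monoid.m_closed[OF mon cr(3) cr(4)]] by simp
  obtain a1 a2 where f: "a1 \<in> L" "a2 \<in> L" "s a1 = r a2" "a = c a1 a2" "d a1 = p" "d a2 = q"
  proof -
    have "\<exists>!(x, y). x \<in> L \<and> y \<in> L \<and> s x = r y \<and> a = c x y \<and> d x = p \<and> d y = q"
      using pg_uf[OF pg a(1) p q da] .
    then have "\<exists>x y. x \<in> L \<and> y \<in> L \<and> s x = r y \<and> a = c x y \<and> d x = p \<and> d y = q"
      by (rule ex1_pair_ex)
    then show ?thesis using that by blast
  qed
  have ra: "r a = r a1" using sc_comp[OF sc f(1,2,3)] f(4) by simp
  define k where "k = c \<mu> a1"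
  have sma: "s \<mu> = r a1" using a(2) ra by simp
  have kL: "k \<in> L" "s k = s a1" using sc_comp[OF sc mu f(1) sma] unfolding k_def by auto
  have kE: "k \<in> ext_set L r s c \<mu>" unfolding ext_set_def k_def using f(1) sma by auto
  have dk: "d k = l" using pg_dc[OF pg mu f(1) sma] f(5) l1 unfolding k_def by simp
  have "\<eta> = c k a2" using sc_assoc[OF sc mu f(1) f(2) sma f(3)] a(3) f(4) unfolding k_def by simp
  moreover have "s k = r a2" using kL(2) f(3) by simp
  ultimately show ?thesis using kL(1) kE dk f(2) f(6) by blast
qed

lemma mce:
  assumes w: "wqlo G P" and pg: "P_graph G P L r s c d"
    and mu: "\<mu> \<in> L" and nu: "\<nu> \<in> L" and lP: "l \<in> P"
    and l1: "wqlo_le G P (d \<mu>) l" and l2: "wqlo_le G P (d \<nu>) l"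
    and lub: "\<forall>t\<in>P. wqlo_le G P (d \<mu>) t \<and> wqlo_le G P (d \<nu>) t \<longrightarrow> wqlo_le G P l t"
    and eta: "\<eta> \<in> ext_set L r s c \<mu>" "\<eta> \<in> ext_set L r s c \<nu>"
  shows "\<exists>k. k \<in> ext_set L r s c \<mu> \<and> k \<in> ext_set L r s c \<nu> \<and> d k = l \<and> \<eta> \<in> ext_set L r s c k"
proof -
  have sc: "small_category L r s c" using pg by (rule pg_sc)
  have etaL: "\<eta> \<in> L" using ext_sub[OF sc mu] eta by blast
  obtain a where a: "a \<in> L" "s \<mu> = r a" "\<eta> = c \<mu> a" using eta unfolding ext_set_def by auto
  obtain b where b: "b \<in> L" "s \<nu> = r b" "\<eta> = c \<nu> b" using eta unfolding ext_set_def by auto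
  have ub1: "wqlo_le G P (d \<mu>) (d \<eta>)" unfolding wqlo_le_def
    using pg_dc[OF pg mu a(1,2)] a(3) pg_dP[OF pg a(1)] by auto
  have ub2: "wqlo_le G P (d \<nu>) (d \<eta>)" unfolding wqlo_le_def
    using pg_dc[OF pg nu b(1,2)] b(3) pg_dP[OF pg b(1)] by auto
  have "wqlo_le G P l (d \<eta>)" using lub ub1 ub2 pg_dP[OF pg etaL] by blast
  then obtain q where q: "q \<in> P" "l \<otimes>\<^bsub>G\<^esub> q = d \<eta>" unfolding wqlo_le_def by blast
  obtain p1 where p1: "p1 \<in> P" "d \<mu> \<otimes>\<^bsub>G\<^esub> p1 = l" using l1 unfolding wqlo_le_def by blast
  obtain p2 where p2: "p2 \<in> P" "d \<nu> \<otimes>\<^bsub>G\<^esub> p2 = l" using l2 unfolding wqlo_le_def by blast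
  obtain k a2 where A: "k \<in> L" "k \<in> ext_set L r s c \<mu>" "d k = l" "a2 \<in> L" "s k = r a2" "\<eta> = c k a2" "d a2 = q"
    using one_side[OF w pg mu eta(1) p1(1) q(1) p1(2) q(2)] by blast
  obtain k' b2 where B: "k' \<in> L" "k' \<in> ext_set L r s c \<nu>" "d k' = l" "b2 \<in> L" "s k' = r b2" "\<eta> = c k' b2" "d b2 = q"
    using one_side[OF w pg nu eta(2) p2(1) q(1) p2(2) q(2)] by blast
  have U: "\<exists>!(x, y). x \<in> L \<and> y \<in> L \<and> s x = r y \<and> \<eta> = c x y \<and> d x = l \<and> d y = q"
    using pg_uf[OF pg etaL lP q(1)] q(2) by simp
  have "k = k'" using ex1_pair_uniq[OF U, of k a2 k' b2] A B by blast
  moreover have "\<eta> \<in> ext_set L r s c k" using A unfolding ext_set_def by auto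
  ultimately show ?thesis using A B by auto
qed

lemma filter_hits:
  assumes sc: "small_category L r s c" and a: "a \<in> x" "b \<in> x" and J: "J \<subseteq> L"
    and eq: "ext_set L r s c a \<inter> ext_set L r s c b = (\<Union>k\<in>J. ext_set L r s c k)"
    and x: "x \<in> filters L r s c"
  shows "J \<inter> x \<noteq> {}"
proof -
  obtain e where e: "e \<in> x" "prec L r s c a e" "prec L r s c b e" using x a unfolding filters_def by blast
  then have "e \<in> ext_set L r s c a \<inter> ext_set L r s c b" unfolding prec_def by auto
  then obtain k where k: "k \<in> J" "e \<in> ext_set L r s c k" using eq by auto
  then have "k \<in> x" using x e J unfolding filters_def prec_def by blast
  then show ?thesis using k by auto
qed

definition subb :: "'a set \<Rightarrow> 'a set set set" where
  "subb L = {{x. x \<subseteq> L \<and> a \<in> x} | a. a \<in> L} \<union> {{x. x \<subseteq> L \<and> a \<notin> x} | a. a \<in> L}"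

lemma basic_open:
  assumes "finite K1" "finite K2" "K1 \<subseteq> L" "K2 \<subseteq> L"
  shows "openin (powerset_top L) {x. K1 \<subseteq> x \<and> x \<subseteq> L - K2}"
  unfolding powerset_top_def using assms by (intro topology_generated_by_Basis) blast

lemma topspace_pt: "topspace (powerset_top L) = Pow L"
  unfolding powerset_top_def topology_generated_by_topspace
proof
  show "\<Union> {{x. K1 \<subseteq> x \<and> x \<subseteq> L - K2} |K1 K2. finite K1 \<and> finite K2 \<and> K1 \<subseteq> L \<and> K2 \<subseteq> L} \<subseteq> Pow L"
    by blast
  show "Pow L \<subseteq> \<Union> {{x. K1 \<subseteq> x \<and> x \<subseteq> L - K2} |K1 K2. finite K1 \<and> finite K2 \<and> K1 \<subseteq> L \<and> K2 \<subseteq> L}"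
  proof
    fix y assume "y \<in> Pow L"
    then have "y \<in> {x. {} \<subseteq> x \<and> x \<subseteq> L - {}}" by auto
    then show "y \<in> \<Union> {{x. K1 \<subseteq> x \<and> x \<subseteq> L - K2} |K1 K2. finite K1 \<and> finite K2 \<and> K1 \<subseteq> L \<and> K2 \<subseteq> L}"
      by blast
  qed
qed

lemma subb_open: "S \<in> subb L \<Longrightarrow> openin (powerset_top L) S"
proof -
  assume "S \<in> subb L"
  then obtain a where a: "a \<in> L" "S = {x. {a} \<subseteq> x \<and> x \<subseteq> L - {}} \<or> S = {x. {} \<subseteq> x \<and> x \<subseteq> L - {a}}"
    unfolding subb_def by blast
  then show ?thesis using basic_open[of "{a}" "{}" L] basic_open[of "{}" "{a}" L] by auto
qed

lemma basic_in_sub: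
  assumes "finite K1" "finite K2" "K1 \<subseteq> L" "K2 \<subseteq> L"
  shows "(finite intersection_of (\<lambda>x. x \<in> subb L) relative_to Pow L) {x. K1 \<subseteq> x \<and> x \<subseteq> L - K2}"
proof -
  define F where "F = (\<lambda>a. {x. x \<subseteq> L \<and> a \<in> x}) ` K1 \<union> (\<lambda>a. {x. x \<subseteq> L \<and> a \<notin> x}) ` K2"
  have "finite F" using assms unfolding F_def by auto
  moreover have "F \<subseteq> Collect (\<lambda>x. x \<in> subb L)" using assms unfolding F_def subb_def by blast
  moreover have "Pow L \<inter> \<Inter>F = {x. K1 \<subseteq> x \<and> x \<subseteq> L - K2}" unfolding F_def by blast
  ultimately show ?thesis unfolding relative_to_def intersection_of_def by blast
qed

lemma pt_eq: "topology (arbitrary union_of (finite intersection_of (\<lambda>x. x \<in> subb L) relative_to Pow L)) = powerset_top L"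
  (is "topology ?O = _")
proof (subst topology_eq, intro allI iffI)
  fix S assume "openin (topology ?O) S"
  then show "openin (powerset_top L) S"
    using minimal_topology_subbase[of "\<lambda>x. x \<in> subb L" "powerset_top L" "Pow L" S] subb_open
      topspace_pt[of L] openin_topspace[of "powerset_top L"] by auto
next
  fix S assume "openin (powerset_top L) S"
  then have "generate_topology_on {{x. K1 \<subseteq> x \<and> x \<subseteq> L - K2} | K1 K2. finite K1 \<and> finite K2 \<and> K1 \<subseteq> L \<and> K2 \<subseteq> L} S"
    unfolding powerset_top_def by (rule openin_topology_generated_by)
  then show "openin (topology ?O) S"
  proof induction
    case Empty
    then show ?case by simp
  next
    case (Int a b)
    then show ?case by (simp add: openin_Int)
  next
    case (UN K)
    then show ?case by (simp add: openin_Union)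
  next
    case (Basis s)
    then obtain K1 K2 where "finite K1" "finite K2" "K1 \<subseteq> L" "K2 \<subseteq> L" "s = {x. K1 \<subseteq> x \<and> x \<subseteq> L - K2}"
      by blast
    then show ?case using basic_in_sub openin_subbase arbitrary_union_of_inc by metis
  qed
qed

lemma compact_pt:
  assumes ne: "L \<noteq> {}" shows "compact_space (powerset_top L)"
proof (rule Alexander_subbase_alt[where \<B> = "subb L" and U = "Pow L"])
  show "Pow L \<subseteq> \<Union> (subb L)"
  proof
    fix y assume y: "y \<in> Pow L"
    obtain a where "a \<in> L" using ne by auto
    then show "y \<in> \<Union> (subb L)" using y unfolding subb_def by (cases "a \<in> y") blast+
  qed
next
  fix C assume C: "C \<subseteq> subb L" "Pow L \<subseteq> \<Union> C"
  define N where "N = {a \<in> L. {x. x \<subseteq> L \<and> a \<notin> x} \<in> C}"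
  have "N \<in> Pow L" unfolding N_def by auto
  then obtain X where X: "X \<in> C" "N \<in> X" using C by auto
  then obtain a where a: "a \<in> L" "X = {x. x \<subseteq> L \<and> a \<in> x} \<or> X = {x. x \<subseteq> L \<and> a \<notin> x}"
    using C unfolding subb_def by blast
  have "X = {x. x \<subseteq> L \<and> a \<in> x}"
  proof (rule ccontr)
    assume "X \<noteq> {x. x \<subseteq> L \<and> a \<in> x}"
    then have "X = {x. x \<subseteq> L \<and> a \<notin> x}" using a by auto
    then show False using X a unfolding N_def by auto
  qed
  then have "a \<in> N" using X by auto
  then have "{x. x \<subseteq> L \<and> a \<notin> x} \<in> C" unfolding N_def by auto
  then show "\<exists>C'. finite C' \<and> C' \<subseteq> C \<and> Pow L \<subseteq> \<Union> C'"
    using X \<open>X = _\<close> by (rule_tac x="{X, {x. x \<subseteq> L \<and> a \<notin> x}}" in exI) auto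
qed (rule pt_eq)

lemma nbhd:
  assumes K: "finite K1" "finite K2" "K1 \<subseteq> L" "K2 \<subseteq> L"
    and y: "y \<subseteq> L" "K1 \<subseteq> y" "y \<inter> K2 = {}"
    and fl: "\<And>x. x \<in> filters L r s c \<Longrightarrow> la \<in> x \<Longrightarrow> K1 \<subseteq> x \<Longrightarrow> x \<inter> K2 \<noteq> {}"
  shows "\<exists>T. openin (powerset_top L) T \<and> y \<in> T \<and> T \<subseteq> Pow L - cylZ L r s c la"
proof (intro exI conjI)
  show "openin (powerset_top L) {x. K1 \<subseteq> x \<and> x \<subseteq> L - K2}" using basic_open[OF K] .
  show "y \<in> {x. K1 \<subseteq> x \<and> x \<subseteq> L - K2}" using y by auto
  show "{x. K1 \<subseteq> x \<and> x \<subseteq> L - K2} \<subseteq> Pow L - cylZ L r s c la"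
    using fl unfolding cylZ_def by blast
qed

lemma Z_closed:
  assumes sc: "small_category L r s c" and la: "la \<in> L" and FA: "la \<in> FA L r s c"
  shows "closedin (powerset_top L) (cylZ L r s c la)"
proof -
  have FA': "\<And>\<mu> \<nu>. \<mu> \<in> ext_set L r s c la \<Longrightarrow> \<nu> \<in> L \<Longrightarrow> \<exists>J. finite J \<and> J \<subseteq> L \<and>
        ext_set L r s c \<mu> \<inter> ext_set L r s c \<nu> = (\<Union>\<kappa>\<in>J. ext_set L r s c \<kappa>)"
    using FA unfolding FA_def by blast
  have sub: "cylZ L r s c la \<subseteq> Pow L" unfolding cylZ_def filters_def by blast
  have "openin (powerset_top L) (Pow L - cylZ L r s c la)"
  proof (subst openin_subopen, intro ballI)
    fix y assume yy: "y \<in> Pow L - cylZ L r s c la"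
    then have yL: "y \<subseteq> L" by auto
    show "\<exists>T. openin (powerset_top L) T \<and> y \<in> T \<and> T \<subseteq> Pow L - cylZ L r s c la"
    proof (cases "la \<in> y")
      case False
      show ?thesis by (rule nbhd[of "{}" "{la}"]) (use la yL False in auto)
    next
      case True
      then have ny: "y \<notin> filters L r s c" using yy unfolding cylZ_def by auto
      have "\<not> (\<forall>e\<in>L. \<forall>m\<in>y. prec L r s c e m \<longrightarrow> e \<in> y) \<or>
            \<not> (\<forall>m\<in>y. \<forall>n\<in>y. \<exists>e\<in>y. prec L r s c m e \<and> prec L r s c n e)"
        using ny yL True unfolding filters_def by blast
      then show ?thesis
      proof
        assume "\<not> (\<forall>e\<in>L. \<forall>m\<in>y. prec L r s c e m \<longrightarrow> e \<in> y)"
        then obtain e m where em: "e \<in> L" "m \<in> y" "prec L r s c e m" "e \<notin> y" by blast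
        show ?thesis
        proof (rule nbhd[of "{m}" "{e}"])
          fix x assume "x \<in> filters L r s c" "{m} \<subseteq> x"
          then show "x \<inter> {e} \<noteq> {}" using em unfolding filters_def by blast
        qed (use em yL in auto)
      next
        assume "\<not> (\<forall>m\<in>y. \<forall>n\<in>y. \<exists>e\<in>y. prec L r s c m e \<and> prec L r s c n e)"
        then obtain m n where mn: "m \<in> y" "n \<in> y" "\<And>e. e \<in> y \<Longrightarrow> \<not> (prec L r s c m e \<and> prec L r s c n e)"
          by blast
        have mL: "m \<in> L" "n \<in> L" using mn yL by auto
        obtain J1 where J1: "finite J1" "J1 \<subseteq> L"
          "ext_set L r s c la \<inter> ext_set L r s c m = (\<Union>\<kappa>\<in>J1. ext_set L r s c \<kappa>)"
          using FA'[OF ext_self[OF sc la] mL(1)] by blast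
        show ?thesis
        proof (cases "J1 \<inter> y = {}")
          case True
          show ?thesis
          proof (rule nbhd[of "{la, m}" J1])
            fix x assume "x \<in> filters L r s c" "{la, m} \<subseteq> x"
            then show "x \<inter> J1 \<noteq> {}" using filter_hits[OF sc _ _ J1(2) J1(3)] by blast
          qed (use J1 True \<open>la \<in> y\<close> mn mL la yL in auto)
        next
          case False
          then obtain k where k: "k \<in> J1" "k \<in> y" by blast
          have kL: "k \<in> L" using k J1 by auto
          have kE: "k \<in> ext_set L r s c la" "k \<in> ext_set L r s c m"
            using ext_self[OF sc kL] k(1) J1(3) by blast+
          obtain J2 where J2: "finite J2" "J2 \<subseteq> L"
            "ext_set L r s c k \<inter> ext_set L r s c n = (\<Union>\<kappa>\<in>J2. ext_set L r s c \<kappa>)"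
            using FA'[OF kE(1) mL(2)] by blast
          show ?thesis
          proof (cases "J2 \<inter> y = {}")
            case True
            show ?thesis
            proof (rule nbhd[of "{k, n}" J2])
              fix x assume "x \<in> filters L r s c" "{k, n} \<subseteq> x"
              then show "x \<inter> J2 \<noteq> {}" using filter_hits[OF sc _ _ J2(2) J2(3)] by blast
            qed (use J2 True k kL mn mL yL in auto)
          next
            case False
            then obtain k2 where k2: "k2 \<in> J2" "k2 \<in> y" by blast
            have k2L: "k2 \<in> L" using k2 J2 by auto
            have "k2 \<in> ext_set L r s c k" "k2 \<in> ext_set L r s c n"
              using ext_self[OF sc k2L] k2(1) J2(3) by blast+
            moreover have "ext_set L r s c k \<subseteq> ext_set L r s c m" using ext_trans[OF sc mL(1) kE(2)] .
            ultimately have "prec L r s c m k2 \<and> prec L r s c n k2" unfolding prec_def by blast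
            then show ?thesis using mn(3)[OF k2(2)] by blast
          qed
        qed
      qed
    qed
  qed
  then show ?thesis unfolding closedin_def topspace_pt using sub by simp
qed

theorem lemma4p8:
  fixes G :: "('q, 'm) monoid_scheme" and P :: "'q set"
    and L :: "'a set" and r s :: "'a \<Rightarrow> 'a" and c :: "'a \<Rightarrow> 'a \<Rightarrow> 'a" and d :: "'a \<Rightarrow> 'q"
    and la :: 'a
  assumes "wqlo G P"
    and "P_graph G P L r s c d"
    and "FA L r s c \<noteq> {}"
    and "la \<in> L"
  shows "la \<in> FA L r s c \<longleftrightarrow> compactin (filter_top L r s c) (cylZ L r s c la)"
proof -
  note w = assms(1) and pg = assms(2) and la = assms(4)
  have sc: "small_category L r s c" using pg by (rule pg_sc)
  have Zsub: "cylZ L r s c la \<subseteq> filters L r s c" unfolding cylZ_def by auto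
  have ne: "L \<noteq> {}" using la by auto
  show ?thesis
  proof
    assume FA: "la \<in> FA L r s c"
    have cl: "closedin (powerset_top L) (cylZ L r s c la)" using Z_closed[OF sc la FA] .
    have "compactin (powerset_top L) (topspace (powerset_top L))"
      using compact_pt[OF ne] unfolding compact_space_def .
    then have "compactin (powerset_top L) (cylZ L r s c la)"
      by (rule closed_compactin[OF _ closedin_subset[OF cl] cl])
    then show "compactin (filter_top L r s c) (cylZ L r s c la)"
      unfolding filter_top_def compactin_subtopology using Zsub by blast
  next
    assume "compactin (filter_top L r s c) (cylZ L r s c la)"
    then have C: "compactin (powerset_top L) (cylZ L r s c la)"
      unfolding filter_top_def compactin_subtopology by blast
    show "la \<in> FA L r s c"
    proof (rule ccontr)
      assume nFA: "la \<notin> FA L r s c"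
      have "\<not> (la \<in> L \<and> (\<forall>\<mu> \<in> ext_set L r s c la. \<forall>\<nu> \<in> L.
      \<exists>J. finite J \<and> J \<subseteq> L \<and>
        ext_set L r s c \<mu> \<inter> ext_set L r s c \<nu> = (\<Union>\<kappa>\<in>J. ext_set L r s c \<kappa>)))"
        using nFA unfolding FA_def mem_Collect_eq .
      then obtain \<mu> \<nu> where mu: "\<mu> \<in> ext_set L r s c la" and nu: "\<nu> \<in> L"
        and nf0: "\<not> (\<exists>J. finite J \<and> J \<subseteq> L \<and>
        ext_set L r s c \<mu> \<inter> ext_set L r s c \<nu> = (\<Union>\<kappa>\<in>J. ext_set L r s c \<kappa>))"
        using la by (auto simp only: simp_thms bex_simps ball_simps)
      have nf: "\<And>J. finite J \<Longrightarrow> J \<subseteq> L \<Longrightarrow>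
           ext_set L r s c \<mu> \<inter> ext_set L r s c \<nu> \<noteq> (\<Union>\<kappa>\<in>J. ext_set L r s c \<kappa>)"
        using nf0 by (simp only: not_ex de_Morgan_conj) (meson)
      have muL: "\<mu> \<in> L" using mu ext_sub[OF sc la] by blast
      have "ext_set L r s c \<mu> \<inter> ext_set L r s c \<nu> \<noteq> {}" using nf[of "{}"] by auto
      then obtain e0 where e0: "e0 \<in> ext_set L r s c \<mu>" "e0 \<in> ext_set L r s c \<nu>" by blast
      have e0L: "e0 \<in> L" using ext_sub[OF sc muL] e0 by blast
      obtain a where a: "a \<in> L" "s \<mu> = r a" "e0 = c \<mu> a" using e0 unfolding ext_set_def by auto
      obtain b where b: "b \<in> L" "s \<nu> = r b" "e0 = c \<nu> b" using e0 unfolding ext_set_def by auto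
      have ub1: "wqlo_le G P (d \<mu>) (d e0)" unfolding wqlo_le_def
        using pg_dc[OF pg muL a(1,2)] a(3) pg_dP[OF pg a(1)] by auto
      have ub2: "wqlo_le G P (d \<nu>) (d e0)" unfolding wqlo_le_def
        using pg_dc[OF pg nu b(1,2)] b(3) pg_dP[OF pg b(1)] by auto
      have lubs: "\<forall>p\<in>P. \<forall>q\<in>P. (\<exists>r\<in>P. wqlo_le G P p r \<and> wqlo_le G P q r) \<longrightarrow>
          (\<exists>l\<in>P. wqlo_le G P p l \<and> wqlo_le G P q l \<and>
             (\<forall>r\<in>P. wqlo_le G P p r \<and> wqlo_le G P q r \<longrightarrow> wqlo_le G P l r))"
        using w unfolding wqlo_def by blast
      have "\<exists>t\<in>P. wqlo_le G P (d \<mu>) t \<and> wqlo_le G P (d \<nu>) t"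
        using ub1 ub2 pg_dP[OF pg e0L] by blast
      from lubs[rule_format, OF pg_dP[OF pg muL] pg_dP[OF pg nu] this]
      obtain l where l: "l \<in> P" "wqlo_le G P (d \<mu>) l" "wqlo_le G P (d \<nu>) l"
        "\<forall>t\<in>P. wqlo_le G P (d \<mu>) t \<and> wqlo_le G P (d \<nu>) t \<longrightarrow> wqlo_le G P l t"
        by blast
      define M where "M = {k \<in> ext_set L r s c \<mu> \<inter> ext_set L r s c \<nu>. d k = l}"
      have MsL: "M \<subseteq> L" using ext_sub[OF sc muL] unfolding M_def by blast
      have Meq: "ext_set L r s c \<mu> \<inter> ext_set L r s c \<nu> = (\<Union>k\<in>M. ext_set L r s c k)"
      proof
        show "ext_set L r s c \<mu> \<inter> ext_set L r s c \<nu> \<subseteq> (\<Union>k\<in>M. ext_set L r s c k)"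
        proof
          fix e assume "e \<in> ext_set L r s c \<mu> \<inter> ext_set L r s c \<nu>"
          then obtain k where "k \<in> ext_set L r s c \<mu>" "k \<in> ext_set L r s c \<nu>" "d k = l" "e \<in> ext_set L r s c k"
            using mce[OF w pg muL nu l(1) l(2) l(3) l(4)] by blast
          then show "e \<in> (\<Union>k\<in>M. ext_set L r s c k)" unfolding M_def by blast
        qed
        show "(\<Union>k\<in>M. ext_set L r s c k) \<subseteq> ext_set L r s c \<mu> \<inter> ext_set L r s c \<nu>"
          using ext_trans[OF sc muL] ext_trans[OF sc nu] unfolding M_def by blast
      qed
      have infM: "infinite M"
      proof
        assume "finite M"
        from nf[OF this MsL] Meq show False by simp
      qed
      define Uo where "Uo k = {x. x \<subseteq> L \<and> k \<in> x}" for k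
      define UU where "UU = {{x. x \<subseteq> L \<and> \<mu> \<notin> x}, {x. x \<subseteq> L \<and> \<nu> \<notin> x}} \<union> Uo ` M"
      have opn: "\<forall>U\<in>UU. openin (powerset_top L) U"
      proof
        fix U assume "U \<in> UU"
        then consider "U = {x. {} \<subseteq> x \<and> x \<subseteq> L - {\<mu>}}" | "U = {x. {} \<subseteq> x \<and> x \<subseteq> L - {\<nu>}}"
          | k where "k \<in> M" "U = {x. {k} \<subseteq> x \<and> x \<subseteq> L - {}}"
          unfolding UU_def Uo_def by blast
        then show "openin (powerset_top L) U"
        proof cases
          case 1 then show ?thesis using basic_open[of "{}" "{\<mu>}" L] muL by simp
        next
          case 2 then show ?thesis using basic_open[of "{}" "{\<nu>}" L] nu by simp
        next
          case 3 then show ?thesis using basic_open[of "{k}" "{}" L] MsL by auto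
        qed
      qed
      have cov: "cylZ L r s c la \<subseteq> \<Union>UU"
      proof
        fix x assume x: "x \<in> cylZ L r s c la"
        then have xf: "x \<in> filters L r s c" and xL: "x \<subseteq> L" unfolding cylZ_def filters_def by auto
        show "x \<in> \<Union>UU"
        proof (cases "\<mu> \<in> x \<and> \<nu> \<in> x")
          case True
          then obtain k where kM: "k \<in> M" and kx: "k \<in> x"
            using filter_hits[OF sc _ _ MsL Meq xf] by blast
          have "Uo k \<in> UU" unfolding UU_def using kM by blast
          moreover have "x \<in> Uo k" unfolding Uo_def using xL kx by blast
          ultimately show ?thesis by (rule UnionI)
        next
          case False
          have A: "{x. x \<subseteq> L \<and> \<mu> \<notin> x} \<in> UU" "{x. x \<subseteq> L \<and> \<nu> \<notin> x} \<in> UU"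
            unfolding UU_def by blast+
          show ?thesis
          proof (cases "\<mu> \<in> x")
            case True
            then have "\<nu> \<notin> x" using False by blast
            then have "x \<in> {x. x \<subseteq> L \<and> \<nu> \<notin> x}" using xL by blast
            then show ?thesis using A(2) by (rule UnionI[rotated])
          next
            case False
            then have "x \<in> {x. x \<subseteq> L \<and> \<mu> \<notin> x}" using xL by blast
            then show ?thesis using A(1) by (rule UnionI[rotated])
          qed
        qed
      qed
      have cpt: "\<forall>\<U>. (\<forall>U \<in> \<U>. openin (powerset_top L) U) \<and> cylZ L r s c la \<subseteq> \<Union>\<U>
          \<longrightarrow> (\<exists>\<F>. finite \<F> \<and> \<F> \<subseteq> \<U> \<and> cylZ L r s c la \<subseteq> \<Union>\<F>)"
        using C unfolding compactin_def by (rule conjunct2)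
      have "\<exists>F. finite F \<and> F \<subseteq> UU \<and> cylZ L r s c la \<subseteq> \<Union>F"
        using mp[OF spec[OF cpt, of UU] conjI[OF opn cov]] .
      then obtain F where F: "finite F" "F \<subseteq> UU" "cylZ L r s c la \<subseteq> \<Union>F"
        by (elim exE conjE)
      define MF where "MF = {k \<in> M. Uo k \<in> F}"
      have inj: "inj_on Uo MF"
      proof (rule inj_onI)
        fix k k' assume kk: "k \<in> MF" "k' \<in> MF" "Uo k = Uo k'"
        then have "k \<in> L" using MsL unfolding MF_def by auto
        then have "{k} \<in> Uo k" unfolding Uo_def by simp
        then have "{k} \<in> Uo k'" using kk(3) by simp
        then show "k = k'" unfolding Uo_def by simp
      qed
      have "Uo ` MF \<subseteq> F" unfolding MF_def by auto
      then have fMF: "finite MF" using finite_imageD[OF finite_subset[OF _ F(1)] inj] by simp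
      have "\<not> M \<subseteq> MF" using infM fMF finite_subset by blast
      then obtain k' where k': "k' \<in> M" "k' \<notin> MF" by blast
      have k'L: "k' \<in> L" and k'E: "k' \<in> ext_set L r s c \<mu>" "k' \<in> ext_set L r s c \<nu>" and dk': "d k' = l"
        using k' MsL unfolding M_def by auto
      define y where "y = {e \<in> L. k' \<in> ext_set L r s c e}"
      have yf: "y \<in> filters L r s c"
        unfolding filters_def
      proof (intro CollectI conjI ballI impI)
        show "y \<subseteq> L" unfolding y_def by auto
        show "y \<noteq> {}" using ext_self[OF sc k'L] k'L unfolding y_def by auto
      next
        fix e m assume em: "e \<in> L" "m \<in> y" "prec L r s c e m"
        have "ext_set L r s c m \<subseteq> ext_set L r s c e" using ext_trans[OF sc em(1)] em(3) unfolding prec_def by blast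
        moreover have "k' \<in> ext_set L r s c m" using em(2) unfolding y_def by simp
        ultimately show "e \<in> y" using em(1) unfolding y_def by blast
      next
        fix m n assume mn: "m \<in> y" "n \<in> y"
        have "k' \<in> y" using ext_self[OF sc k'L] k'L unfolding y_def by simp
        moreover have "prec L r s c m k' \<and> prec L r s c n k'" using mn unfolding y_def prec_def by simp
        ultimately show "\<exists>e\<in>y. prec L r s c m e \<and> prec L r s c n e" by blast
      qed
      have "la \<in> y" using ext_trans[OF sc la mu] k'E la unfolding y_def by auto
      then have "y \<in> cylZ L r s c la" using yf unfolding cylZ_def by auto
      then obtain X where X: "X \<in> F" "y \<in> X" using F(3) by blast
      have my: "\<mu> \<in> y" "\<nu> \<in> y" using muL nu k'E unfolding y_def by auto
      have "X \<in> UU" using X F(2) by blast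
      moreover have "X \<noteq> {x. x \<subseteq> L \<and> \<mu> \<notin> x}" using X(2) my(1) by blast
      moreover have "X \<noteq> {x. x \<subseteq> L \<and> \<nu> \<notin> x}" using X(2) my(2) by blast
      ultimately have "X \<in> Uo ` M" unfolding UU_def by blast
      then obtain k where k: "k \<in> M" "X = Uo k" by blast
      have "y \<in> Uo k" using X k by simp
      then have "k \<in> y" unfolding Uo_def by simp
      then have "k' \<in> ext_set L r s c k" "k \<in> L" unfolding y_def by auto
      moreover have "d k = l" using k unfolding M_def by auto
      ultimately have "k' = k" using deg_eq_ext[OF w pg, of k k'] dk' by simp
      then have "k' \<in> MF" using k X unfolding MF_def by simp
      then show False using k' by blast
    qed
  qed
qed

end
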